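(* Let $Q$ be a quantum circuit acting on $w$ qubits and let $k$ be a positive integer with $k\le w$. Let $R$ be the circuit on $w+1$ qubits, divided into a single-qubit register $\mathsf{O}$ (the first qubit), a $k$-qubit register $\mathsf{Q}$ (whose first qubit is denoted $\mathsf{Q}^{(1)}$) and a $(w-k)$-qubit register $\mathsf{R}$, that performs in order: (1) the $k$-controlled Hadamard $C^k(H)$ with controls $\mathsf{Q}$ and target $\mathsf{O}$, followed by $X$ on each qubit of $\mathsf{Q}$; (2) $Q$ on $(\mathsf{Q},\mathsf{R})$; (3) the controlled-$Z$ on $(\mathsf{O},\mathsf{Q}^{(1)})$; (4) $Q^\dagger$ on $(\mathsf{Q},\mathsf{R})$; (5) $X$ on each qubit of $\mathsf{Q}$, followed by $C^k(H)$ with controls $\mathsf{Q}$ and target $\mathsf{O}$; with $\mathsf{O}$ as output qubit. Then \[1-2^{-k}\bigl(1-(p_{\mathrm{acc}}(Q,k))^2\bigr)\le p_{\mathrm{acc}}(R,1)\le 1-2^{-k}\bigl(1-p_{\mathrm{acc}}(Q,k)\bigr).\]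
   Context: For a circuit $Q$ on $w$ qubits and $1\le k\le w$, $p_{\mathrm{acc}}(Q,k)=\mathrm{tr}\,\Pi_{\mathrm{acc}}Q\rho^{(w,k)}_{\mathrm{init}}Q^\dagger$, where $\rho^{(w,k)}_{\mathrm{init}}=(|0\rangle\langle0|)^{\otimes k}\otimes(I/2)^{\otimes(w-k)}$ and $\Pi_{\mathrm{acc}}=|0\rangle\langle0|\otimes I^{\otimes(w-1)}$; i.e., the first $k$ qubits start clean, the rest maximally mixed, and acceptance means the first qubit is measured as $0$. In $R$, the ordering of qubits is $\mathsf{O},\mathsf{Q},\mathsf{R}$, and $Q$ acting on $(\mathsf{Q},\mathsf{R})$ uses the qubits of $\mathsf{Q}$ as its first $k$ qubits. $C^k(H)$ applies the Hadamard gate to the target iff all $k$ control qubits are $1$; $X$ is the NOT gate and controlled-$Z$ multiplies the phase by $-1$ iff both qubits are $1$. *)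

theory Defs
  imports Complex_Main "Jordan_Normal_Form.Matrix"
begin

text \<open>A state/operator on n qubits is a 2^n x 2^n complex matrix. Basis index x < 2^n
  encodes the bit string of the qubits, qubit 0 (the first qubit) being the most significant bit,
  i.e. the usual tensor-product (Kronecker) ordering.\<close>

definition qbit :: "nat \<Rightarrow> nat \<Rightarrow> nat \<Rightarrow> nat" where
  "qbit n x j = (x div 2 ^ (n - 1 - j)) mod 2"

definition adj :: "complex mat \<Rightarrow> complex mat" where
  "adj A = mat (dim_col A) (dim_row A) (\<lambda>(i,j). cnj (A $$ (j,i)))"

definition unitary :: "nat \<Rightarrow> complex mat \<Rightarrow> bool" where
  "unitary n U \<longleftrightarrow> U \<in> carrier_mat n n \<and> adj U * U = 1\<^sub>m n \<and> U * adj U = 1\<^sub>m n"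

definition mtrace :: "complex mat \<Rightarrow> complex" where
  "mtrace A = (\<Sum>i<dim_row A. A $$ (i,i))"

text \<open>Kronecker (tensor) product; the left factor acts on the first qubits.\<close>
definition kron :: "complex mat \<Rightarrow> complex mat \<Rightarrow> complex mat" where
  "kron A B = mat (dim_row A * dim_row B) (dim_col A * dim_col B)
     (\<lambda>(i,j). A $$ (i div dim_row B, j div dim_col B) * B $$ (i mod dim_row B, j mod dim_col B))"

fun kron_pow :: "complex mat \<Rightarrow> nat \<Rightarrow> complex mat" where
  "kron_pow A 0 = 1\<^sub>m 1"
| "kron_pow A (Suc n) = kron A (kron_pow A n)"

text \<open>Initial state: first k qubits |0>, remaining w-k qubits maximally mixed.\<close>
definition rho_init :: "nat \<Rightarrow> nat \<Rightarrow> complex mat" where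
  "rho_init w k = mat (2^w) (2^w) (\<lambda>(x,y).
     if x = y \<and> (\<forall>j<k. qbit w x j = 0) then 1 / 2 ^ (w - k) else 0)"

definition Pi_acc :: "nat \<Rightarrow> complex mat" where
  "Pi_acc w = mat (2^w) (2^w) (\<lambda>(x,y). if x = y \<and> qbit w x 0 = 0 then 1 else 0)"

definition p_acc :: "nat \<Rightarrow> complex mat \<Rightarrow> nat \<Rightarrow> real" where
  "p_acc w Q k = Re (mtrace (Pi_acc w * Q * rho_init w k * adj Q))"

definition hadamard :: "complex mat" where
  "hadamard = mat 2 2 (\<lambda>(i,j). if i = 1 \<and> j = 1 then - complex_of_real (1 / sqrt 2) else complex_of_real (1 / sqrt 2))"

definition pauli_X :: "complex mat" where
  "pauli_X = mat 2 2 (\<lambda>(i,j). if i \<noteq> j then 1 else 0)"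

definition proj_ones :: "nat \<Rightarrow> complex mat" where
  "proj_ones k = mat (2^k) (2^k) (\<lambda>(x,y). if x = y \<and> (\<forall>j<k. qbit k x j = 1) then 1 else 0)"

definition CkH :: "nat \<Rightarrow> nat \<Rightarrow> complex mat" where
  "CkH w k = kron hadamard (kron (proj_ones k) (1\<^sub>m (2^(w-k))))
           + kron (1\<^sub>m 2) (kron (1\<^sub>m (2^k) - proj_ones k) (1\<^sub>m (2^(w-k))))"

definition X_Q :: "nat \<Rightarrow> nat \<Rightarrow> complex mat" where
  "X_Q w k = kron (1\<^sub>m 2) (kron (kron_pow pauli_X k) (1\<^sub>m (2^(w-k))))"

text \<open>Controlled-Z on qubits O (qubit 0) and Q^(1) (qubit 1) of the w+1 qubits.\<close>
definition CZ_OQ1 :: "nat \<Rightarrow> complex mat" where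
  "CZ_OQ1 w = mat (2^(w+1)) (2^(w+1)) (\<lambda>(x,y).
     if x = y then (if qbit (w+1) x 0 = 1 \<and> qbit (w+1) x 1 = 1 then - 1 else 1) else 0)"

text \<open>The circuit R (later gates multiply on the left).\<close>
definition circuit_R :: "nat \<Rightarrow> nat \<Rightarrow> complex mat \<Rightarrow> complex mat" where
  "circuit_R w k Q =
     (CkH w k * X_Q w k) * kron (1\<^sub>m 2) (adj Q) * CZ_OQ1 w * kron (1\<^sub>m 2) Q * (X_Q w k * CkH w k)"

end

theory Submission
  imports Defs
begin


lemma qbit_zero_iff:
  assumes "x < 2^n" "k \<le> n"
  shows "(\<forall>j<k. qbit n x j = 0) \<longleftrightarrow> x < 2^(n-k)"
  using assms(2)
proof (induction k)
  case 0 then show ?case using assms(1) by simp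
next
  case (Suc k)
  define m where "m = n - 1 - k"
  have nk: "n - k = Suc m" using Suc.prems m_def by simp
  have nk2: "n - Suc k = m" using Suc.prems m_def by simp
  have "(\<forall>j<Suc k. qbit n x j = 0) \<longleftrightarrow> (\<forall>j<k. qbit n x j = 0) \<and> qbit n x k = 0"
    using less_Suc_eq by auto
  also have "\<dots> \<longleftrightarrow> x < 2^Suc m \<and> (x div 2^m) mod 2 = 0"
    using Suc by (simp add: nk qbit_def m_def)
  also have "\<dots> \<longleftrightarrow> x < 2^m"
  proof
    assume a: "x < 2^Suc m \<and> (x div 2^m) mod 2 = 0"
    then have "x div 2^m < 2" by (simp add: less_mult_imp_div_less)
    with a have "x div 2^m = 0" by (metis mod_less)
    then show "x < 2^m" by (simp add: div_eq_0_iff)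
  next
    assume "x < 2^m" then show "x < 2^Suc m \<and> (x div 2^m) mod 2 = 0" by simp
  qed
  finally show ?case by (simp add: nk2)
qed

lemma qbit_one_iff:
  assumes "x < 2^k"
  shows "(\<forall>j<k. qbit k x j = 1) \<longleftrightarrow> x = 2^k - 1"
proof -
  have q: "qbit k x j = 1 \<longleftrightarrow> bit x (k - 1 - j)" for j
    by (simp add: qbit_def bit_iff_odd odd_iff_mod_2_eq_one)
  have "(\<forall>j<k. qbit k x j = 1) \<longleftrightarrow> (\<forall>p<k. bit x p)"
    unfolding q
  proof
    assume h: "\<forall>j<k. bit x (k - 1 - j)"
    show "\<forall>p<k. bit x p"
    proof (intro allI impI)
      fix p assume "p < k"
      then have "k - 1 - (k - 1 - p) = p" "k - 1 - p < k" by auto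
      then show "bit x p" using h by metis
    qed
  next
    assume h: "\<forall>p<k. bit x p"
    show "\<forall>j<k. bit x (k - 1 - j)"
    proof (intro allI impI)
      fix j assume "j < k"
      then have "k - 1 - j < k" by auto
      then show "bit x (k - 1 - j)" using h by blast
    qed
  qed
  also have "\<dots> \<longleftrightarrow> x = (mask k :: nat)"
  proof
    assume h: "\<forall>p<k. bit x p"
    show "x = (mask k :: nat)"
    proof (rule bit_eqI)
      fix p
      have "x = take_bit k x" using assms by (simp add: take_bit_nat_eq_self)
      then have "bit x p \<longleftrightarrow> p < k \<and> bit x p" by (metis bit_take_bit_iff)
      then show "bit x p \<longleftrightarrow> bit (mask k :: nat) p" using h by (auto simp: bit_mask_iff)
    qed
  next
    assume "x = (mask k :: nat)" then show "\<forall>p<k. bit x p" by (simp add: bit_mask_iff)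
  qed
  finally show ?thesis by (simp add: mask_eq_exp_minus_1)
qed



lemma sum_split2: "(\<Sum>l<2*n. f l) = (\<Sum>l<n. f l) + (\<Sum>l<n. f (n + l)) " for f :: "nat \<Rightarrow> 'a::comm_monoid_add"
proof -
  have "(\<Sum>l<2*n. f l) = (\<Sum>l\<in>{0..<n}. f l) + (\<Sum>l\<in>{n..<2*n}. f l)"
    by (simp add: lessThan_atLeast0 sum.atLeastLessThan_concat)
  also have "(\<Sum>l\<in>{n..<2*n}. f l) = (\<Sum>l\<in>{0..<n}. f (l + n))"
    using sum.shift_bounds_nat_ivl[of f 0 n n] by (simp add: mult_2)
  finally show ?thesis by (simp add: lessThan_atLeast0 add.commute)
qed

lemma mult_entry:
  assumes "A \<in> carrier_mat n m" "B \<in> carrier_mat m p" "i < n" "j < p"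
  shows "(A * B) $$ (i,j) = (\<Sum>l<m. A $$ (i,l) * B $$ (l,j))"
  using assms by (simp add: scalar_prod_def lessThan_atLeast0)

lemma kron_dims[simp]: "dim_row (kron A B) = dim_row A * dim_row B" "dim_col (kron A B) = dim_col A * dim_col B"
  unfolding kron_def by (rule dim_row_mat, rule dim_col_mat)

lemma kron_carrier: "A \<in> carrier_mat a b \<Longrightarrow> B \<in> carrier_mat c d \<Longrightarrow> kron A B \<in> carrier_mat (a*c) (b*d)"
  unfolding carrier_mat_def by simp

lemma kron_entry:
  "i < dim_row A * dim_row B \<Longrightarrow> j < dim_col A * dim_col B \<Longrightarrow>
   kron A B $$ (i,j) = A $$ (i div dim_row B, j div dim_col B) * B $$ (i mod dim_row B, j mod dim_col B)"
  unfolding kron_def by (subst index_mat(1), assumption+, simp only: split)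

lemma arith_flip:
  fixes i j K :: nat
  assumes "K > 0" "i < 2*K" "j < 2*K"
  shows "(i div K \<noteq> j div K \<and> i mod K + j mod K = K - 1) \<longleftrightarrow> i + j = 2*K - 1"
proof -
  have a: "i div K < 2" "j div K < 2" using assms by (simp_all add: less_mult_imp_div_less mult.commute)
  have e: "i = i div K * K + i mod K" "j = j div K * K + j mod K" by simp_all
  have m: "i mod K < K" "j mod K < K" using assms by simp_all
  have e1: "i = i div K * K + i mod K" "j = j div K * K + j mod K" by simp_all
  consider "i div K = 0" "j div K = 0" | "i div K = 0" "j div K = 1" | "i div K = 1" "j div K = 0" | "i div K = 1" "j div K = 1"
    using a by linarith
  then show ?thesis
  proof cases
    case 1 then have "i = i mod K" "j = j mod K" using e1 by simp_all
    then show ?thesis using 1 m by linarith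
  next
    case 2 then have "i = i mod K" "j = K + j mod K" using e1 by simp_all
    then show ?thesis using 2 m by linarith
  next
    case 3 then have "i = K + i mod K" "j = j mod K" using e1 by simp_all
    then show ?thesis using 3 m by linarith
  next
    case 4 then have "i = K + i mod K" "j = K + j mod K" using e1 by simp_all
    then show ?thesis using 4 m by linarith
  qed
qed

lemma pauli_X_carrier: "pauli_X \<in> carrier_mat 2 2"
  unfolding pauli_X_def carrier_mat_def by simp

lemma pauli_X_entry: "i < 2 \<Longrightarrow> j < 2 \<Longrightarrow> pauli_X $$ (i,j) = (if i \<noteq> j then 1 else 0)"
  unfolding pauli_X_def by simp

lemma kron_pow_X:
  "kron_pow pauli_X k \<in> carrier_mat (2^k) (2^k) \<and>
   (\<forall>i<2^k. \<forall>j<2^k. kron_pow pauli_X k $$ (i,j) = (if i + j = 2^k - 1 then 1 else 0))"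
proof (induction k)
  case 0 then show ?case by simp
next
  case (Suc k)
  let ?K = "2^k :: nat"
  have d: "dim_row (kron_pow pauli_X k) = ?K" "dim_col (kron_pow pauli_X k) = ?K" using Suc by auto
  have c: "kron_pow pauli_X (Suc k) \<in> carrier_mat (2^Suc k) (2^Suc k)"
    using kron_carrier[OF pauli_X_carrier, of "kron_pow pauli_X k" ?K ?K] Suc by simp
  moreover have "kron_pow pauli_X (Suc k) $$ (i,j) = (if i + j = 2^Suc k - 1 then 1 else 0)"
    if "i < 2^Suc k" "j < 2^Suc k" for i j
  proof -
    have K: "?K > 0" by simp
    have i2: "i < 2 * ?K" "j < 2 * ?K" using that by auto
    have dv: "i div ?K < 2" "j div ?K < 2" using i2 by (simp_all add: less_mult_imp_div_less)
    have md: "i mod ?K < ?K" "j mod ?K < ?K" by simp_all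
    have "kron_pow pauli_X (Suc k) $$ (i,j) = pauli_X $$ (i div ?K, j div ?K) * kron_pow pauli_X k $$ (i mod ?K, j mod ?K)"
      using i2 kron_entry[of i pauli_X "kron_pow pauli_X k" j] pauli_X_carrier d by simp
    also have "\<dots> = (if i div ?K \<noteq> j div ?K then 1 else 0) * (if i mod ?K + j mod ?K = ?K - 1 then 1 else 0)"
      using Suc md pauli_X_entry[OF dv] by simp
    also have "\<dots> = (if i + j = 2 * ?K - 1 then 1 else 0)"
      using arith_flip[OF K i2] by auto
    finally show ?thesis by simp
  qed
  ultimately show ?case by blast
qed



definition sig :: "nat \<Rightarrow> nat \<Rightarrow> nat \<Rightarrow> nat" where
  "sig K L i = (K - 1 - i div L) * L + i mod L"

lemma divmod_lin: "r < L \<Longrightarrow> (q * L + r) div L = q \<and> (q * L + r) mod L = r" for q r L :: nat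
  by simp

lemma sig_props:
  assumes "K > 0" "L > 0" "i < K * L"
  shows "sig K L i < K * L" "sig K L i div L = K - 1 - i div L" "sig K L i mod L = i mod L"
        "sig K L (sig K L i) = i"
proof -
  have q: "i div L < K" using assms by (simp add: less_mult_imp_div_less)
  have r: "i mod L < L" using assms by simp
  show d: "sig K L i div L = K - 1 - i div L" and m: "sig K L i mod L = i mod L"
    unfolding sig_def using divmod_lin[OF r] by auto
  obtain t where t: "K = i div L + 1 + t" using q by (metis less_imp_Suc_add add.commute Suc_eq_plus1 add.assoc)
  have e: "K - 1 - i div L = t" using t by simp
  have "t * L + i mod L < t * L + L" using r by simp
  also have "\<dots> \<le> K * L" unfolding t by (simp add: algebra_simps)
  finally show "sig K L i < K * L" unfolding sig_def e .
  have "K - 1 - (K - 1 - i div L) = i div L" using e t by simp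
  moreover have "sig K L (sig K L i) = (K - 1 - sig K L i div L) * L + sig K L i mod L"
    by (rule sig_def)
  ultimately show "sig K L (sig K L i) = i" unfolding d m by simp
qed


definition dg :: "nat \<Rightarrow> (nat \<Rightarrow> complex) \<Rightarrow> complex mat" where
  "dg n d = mat n n (\<lambda>(i,j). if i = j then d i else 0)"

definition Xp :: "nat \<Rightarrow> nat \<Rightarrow> complex mat" where
  "Xp K L = mat (K*L) (K*L) (\<lambda>(i,j). if j = sig K L i then 1 else 0)"

lemma dg_carrier[simp]: "dg n d \<in> carrier_mat n n"
  unfolding dg_def carrier_mat_def by simp

lemma dg_dims[simp]: "dim_row (dg n d) = n" "dim_col (dg n d) = n"
  unfolding dg_def by simp_all

lemma Xp_dims[simp]: "dim_row (Xp K L) = K*L" "dim_col (Xp K L) = K*L"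
  unfolding Xp_def by simp_all

lemma dg_entry: "i < n \<Longrightarrow> j < n \<Longrightarrow> dg n d $$ (i,j) = (if i = j then d i else 0)"
  unfolding dg_def by simp

lemma Xp_carrier[simp]: "Xp K L \<in> carrier_mat (K*L) (K*L)"
  unfolding Xp_def carrier_mat_def by simp

lemma Xp_entry: "i < K*L \<Longrightarrow> j < K*L \<Longrightarrow> Xp K L $$ (i,j) = (if j = sig K L i then 1 else 0)"
  unfolding Xp_def by simp

lemma dg_left:
  assumes "A \<in> carrier_mat n m" "i < n" "j < m"
  shows "(dg n d * A) $$ (i,j) = d i * A $$ (i,j)"
proof -
  have "(dg n d * A) $$ (i,j) = (\<Sum>l<n. dg n d $$ (i,l) * A $$ (l,j))"
    using assms by (intro mult_entry) auto
  also have "\<dots> = (\<Sum>l<n. if l = i then d i * A $$ (i,j) else 0)"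
    using assms by (intro sum.cong) (auto simp: dg_entry)
  also have "\<dots> = d i * A $$ (i,j)" using assms by simp
  finally show ?thesis .
qed

lemma dg_right:
  assumes "A \<in> carrier_mat m n" "i < m" "j < n"
  shows "(A * dg n d) $$ (i,j) = A $$ (i,j) * d j"
proof -
  have "(A * dg n d) $$ (i,j) = (\<Sum>l<n. A $$ (i,l) * dg n d $$ (l,j))"
    using assms by (intro mult_entry) auto
  also have "\<dots> = (\<Sum>l<n. if l = j then A $$ (i,j) * d j else 0)"
    using assms by (intro sum.cong) (auto simp: dg_entry)
  also have "\<dots> = A $$ (i,j) * d j" using assms by simp
  finally show ?thesis .
qed

lemma Xp_left:
  assumes "K > 0" "L > 0" "A \<in> carrier_mat (K*L) m" "i < K*L" "j < m"
  shows "(Xp K L * A) $$ (i,j) = A $$ (sig K L i, j)"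
proof -
  have "(Xp K L * A) $$ (i,j) = (\<Sum>l<K*L. Xp K L $$ (i,l) * A $$ (l,j))"
    using assms by (intro mult_entry) auto
  also have "\<dots> = (\<Sum>l<K*L. if l = sig K L i then A $$ (sig K L i,j) else 0)"
    using assms by (intro sum.cong) (auto simp: Xp_entry)
  also have "\<dots> = A $$ (sig K L i, j)" using assms sig_props(1)[OF assms(1,2,4)] by simp
  finally show ?thesis .
qed

lemma Xp_right:
  assumes "K > 0" "L > 0" "A \<in> carrier_mat m (K*L)" "i < m" "j < K*L"
  shows "(A * Xp K L) $$ (i,j) = A $$ (i, sig K L j)"
proof -
  have "(A * Xp K L) $$ (i,j) = (\<Sum>l<K*L. A $$ (i,l) * Xp K L $$ (l,j))"
    using assms by (intro mult_entry) auto
  also have "\<dots> = (\<Sum>l<K*L. if l = sig K L j then A $$ (i, sig K L j) else 0)"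
  proof (intro sum.cong refl)
    fix l assume l: "l \<in> {..<K*L}"
    have "j = sig K L l \<longleftrightarrow> l = sig K L j"
      using sig_props(4)[OF assms(1,2)] l assms(5) by auto
    then show "A $$ (i,l) * Xp K L $$ (l,j) = (if l = sig K L j then A $$ (i, sig K L j) else 0)"
      using l assms by (auto simp: Xp_entry)
  qed
  also have "\<dots> = A $$ (i, sig K L j)" using assms sig_props(1)[OF assms(1,2,5)] by simp
  finally show ?thesis .
qed

definition blk :: "nat \<Rightarrow> nat \<Rightarrow> nat \<Rightarrow> complex mat \<Rightarrow> complex mat" where
  "blk n a b X = mat n n (\<lambda>(i,j). X $$ (a*n+i, b*n+j))"

lemma blk_carrier[simp]: "blk n a b X \<in> carrier_mat n n"
  unfolding blk_def carrier_mat_def by simp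

lemma blk_dims[simp]: "dim_row (blk n a b X) = n" "dim_col (blk n a b X) = n"
  unfolding blk_def by simp_all

lemma blk_entry: "i < n \<Longrightarrow> j < n \<Longrightarrow> blk n a b X $$ (i,j) = X $$ (a*n+i, b*n+j)"
  unfolding blk_def by simp

lemma blk_mult:
  assumes "X \<in> carrier_mat (2*n) (2*n)" "Y \<in> carrier_mat (2*n) (2*n)" "a < 2" "b < 2"
  shows "blk n a b (X * Y) = blk n a 0 X * blk n 0 b Y + blk n a 1 X * blk n 1 b Y"
proof (rule eq_matI)
  fix i j assume ij: "i < dim_row (blk n a 0 X * blk n 0 b Y + blk n a 1 X * blk n 1 b Y)"
    "j < dim_col (blk n a 0 X * blk n 0 b Y + blk n a 1 X * blk n 1 b Y)"
  then have i: "i < n" and j: "j < n" by auto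
  have ai: "a*n+i < 2*n" using assms(3) i by (cases a) auto
  have bj: "b*n+j < 2*n" using assms(4) j by (cases b) auto
  have "blk n a b (X * Y) $$ (i,j) = (X*Y) $$ (a*n+i, b*n+j)" using i j by (simp add: blk_entry)
  also have "\<dots> = (\<Sum>l<2*n. X $$ (a*n+i, l) * Y $$ (l, b*n+j))"
    using assms ai bj by (intro mult_entry) auto
  also have "\<dots> = (\<Sum>l<n. X $$ (a*n+i, l) * Y $$ (l, b*n+j)) + (\<Sum>l<n. X $$ (a*n+i, n+l) * Y $$ (n+l, b*n+j))"
    by (rule sum_split2)
  also have "(\<Sum>l<n. X $$ (a*n+i, l) * Y $$ (l, b*n+j)) = (blk n a 0 X * blk n 0 b Y) $$ (i,j)"
    using i j by (subst mult_entry[of _ n n]) (auto simp: blk_entry)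
  also have "(\<Sum>l<n. X $$ (a*n+i, n+l) * Y $$ (n+l, b*n+j)) = (blk n a 1 X * blk n 1 b Y) $$ (i,j)"
    using i j by (subst mult_entry[of _ n n]) (auto simp: blk_entry)
  finally show "blk n a b (X * Y) $$ (i,j) = (blk n a 0 X * blk n 0 b Y + blk n a 1 X * blk n 1 b Y) $$ (i,j)"
    using i j by simp
qed (auto simp: blk_def)

lemma blk_diag_right:
  assumes "X \<in> carrier_mat (2*n) (2*n)" "Y \<in> carrier_mat (2*n) (2*n)" "a < 2" "b < 2"
    "blk n 0 1 Y = 0\<^sub>m n n" "blk n 1 0 Y = 0\<^sub>m n n"
  shows "blk n a b (X * Y) = blk n a b X * blk n b b Y"
proof -
  have c: "blk n c d X \<in> carrier_mat n n" for c d by simp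
  show ?thesis
  proof (cases "b = 0")
    case True
    have "blk n a 0 X * blk n 0 0 Y \<in> carrier_mat n n" by (rule mult_carrier_mat[OF blk_carrier blk_carrier])
    then have z: "blk n a 0 X * blk n 0 0 Y + 0\<^sub>m n n = blk n a 0 X * blk n 0 0 Y" by (rule right_add_zero_mat)
    have "blk n a 0 (X * Y) = blk n a 0 X * blk n 0 0 Y + blk n a 1 X * blk n 1 0 Y"
      using blk_mult[OF assms(1,2,3)] by simp
    also have "\<dots> = blk n a 0 X * blk n 0 0 Y" unfolding assms(6) using z by simp
    finally show ?thesis using True by simp
  next
    case False
    then have "b = 1" using assms by simp
    then show ?thesis using blk_mult[OF assms(1-4)] assms(5)
      by (simp add: left_add_zero_mat[OF mult_carrier_mat[OF blk_carrier blk_carrier]])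
  qed
qed

lemma blk_diag_left:
  assumes "X \<in> carrier_mat (2*n) (2*n)" "Y \<in> carrier_mat (2*n) (2*n)" "a < 2" "b < 2"
    "blk n 0 1 X = 0\<^sub>m n n" "blk n 1 0 X = 0\<^sub>m n n"
  shows "blk n a b (X * Y) = blk n a a X * blk n a b Y"
proof (cases "a = 0")
  case True
  have "blk n 0 0 X * blk n 0 b Y \<in> carrier_mat n n" by (rule mult_carrier_mat[OF blk_carrier blk_carrier])
  then have z: "blk n 0 0 X * blk n 0 b Y + 0\<^sub>m n n = blk n 0 0 X * blk n 0 b Y" by (rule right_add_zero_mat)
  have "blk n 0 b (X * Y) = blk n 0 0 X * blk n 0 b Y + blk n 0 1 X * blk n 1 b Y"
    using blk_mult[OF assms(1,2) _ assms(4)] by simp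
  also have "\<dots> = blk n 0 0 X * blk n 0 b Y" unfolding assms(5) using z by simp
  finally show ?thesis using True by simp
next
  case False
  then have "a = 1" using assms by simp
  then show ?thesis using blk_mult[OF assms(1-4)] assms(6)
    by (simp add: left_add_zero_mat[OF mult_carrier_mat[OF blk_carrier blk_carrier]])
qed



lemma kron2_entry:
  assumes "A \<in> carrier_mat 2 2" "B \<in> carrier_mat n n" "a < 2" "b < 2" "i < n" "j < n"
  shows "kron A B $$ (a*n+i, b*n+j) = A $$ (a,b) * B $$ (i,j)"
proof -
  have ai: "a*n+i < 2*n" using assms(3,5) by (cases a) auto
  have bj: "b*n+j < 2*n" using assms(4,6) by (cases b) auto
  show ?thesis using kron_entry[of "a*n+i" A B "b*n+j"] assms ai bj divmod_lin[OF assms(5)] divmod_lin[OF assms(6)]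
    by simp
qed

lemma blk_kI:
  assumes "B \<in> carrier_mat n n" "a < 2" "b < 2"
  shows "blk n a b (kron (1\<^sub>m 2) B) = (if a = b then B else 0\<^sub>m n n)"
proof (rule eq_matI)
  fix i j assume "i < dim_row (if a = b then B else 0\<^sub>m n n)" "j < dim_col (if a = b then B else 0\<^sub>m n n)"
  then have ij: "i < n" "j < n" using assms by (auto split: if_splits)
  show "blk n a b (kron (1\<^sub>m 2) B) $$ (i,j) = (if a = b then B else 0\<^sub>m n n) $$ (i,j)"
    using ij assms kron2_entry[of "1\<^sub>m 2" B n a b i j] by (simp add: blk_entry)
qed (use assms in auto)

lemma KL: "k \<le> w \<Longrightarrow> (2::nat)^k * 2^(w-k) = 2^w"
  by (simp add: power_add[symmetric])

lemma flipX:
  assumes "K > 0" "L > 0" "i < K*L" "j < K*L"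
  shows "(i div L + j div L = K - 1 \<and> i mod L = j mod L) \<longleftrightarrow> j = sig K L i"
proof
  assume h: "i div L + j div L = K - 1 \<and> i mod L = j mod L"
  have e: "j = j div L * L + j mod L" by simp
  have "j div L = K - 1 - i div L" using h by linarith
  then have "j div L * L + j mod L = (K - 1 - i div L) * L + i mod L" using h by simp
  with e show "j = sig K L i" unfolding sig_def by simp
next
  assume "j = sig K L i"
  moreover have "i div L < K" using assms by (simp add: less_mult_imp_div_less)
  ultimately show "i div L + j div L = K - 1 \<and> i mod L = j mod L"
    using sig_props[OF assms(1,2,3)] by simp
qed

lemma XQ_inner:
  assumes "k \<le> w"
  shows "kron (kron_pow pauli_X k) (1\<^sub>m (2^(w-k))) = Xp (2^k) (2^(w-k))"
proof (rule eq_matI)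
  let ?K = "2^k :: nat" and ?L = "2^(w-k) :: nat"
  have c: "kron_pow pauli_X k \<in> carrier_mat ?K ?K" using kron_pow_X by blast
  fix i j assume "i < dim_row (Xp ?K ?L)" "j < dim_col (Xp ?K ?L)"
  then have ij: "i < ?K * ?L" "j < ?K * ?L" by auto
  have dv: "i div ?L < ?K" "j div ?L < ?K" using ij by (simp_all add: less_mult_imp_div_less)
  have "kron (kron_pow pauli_X k) (1\<^sub>m ?L) $$ (i,j) = kron_pow pauli_X k $$ (i div ?L, j div ?L) * 1\<^sub>m ?L $$ (i mod ?L, j mod ?L)"
    using kron_entry[of i "kron_pow pauli_X k" "1\<^sub>m ?L" j] c ij by simp
  also have "\<dots> = (if i div ?L + j div ?L = ?K - 1 \<and> i mod ?L = j mod ?L then 1 else 0)"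
    using kron_pow_X dv by simp
  also have "\<dots> = Xp ?K ?L $$ (i,j)"
    using flipX[of ?K ?L i j] ij by (simp add: Xp_entry)
  finally show "kron (kron_pow pauli_X k) (1\<^sub>m ?L) $$ (i,j) = Xp ?K ?L $$ (i,j)" .
qed (use kron_pow_X[of k] in auto)

lemma blk_XQ:
  assumes "k \<le> w" "a < 2" "b < 2"
  shows "blk (2^w) a b (X_Q w k) = (if a = b then Xp (2^k) (2^(w-k)) else 0\<^sub>m (2^w) (2^w))"
proof -
  have "Xp (2^k) (2^(w-k)) \<in> carrier_mat (2^w) (2^w)" using Xp_carrier[of "2^k" "2^(w-k)"] KL[OF assms(1)] by simp
  then show ?thesis unfolding X_Q_def XQ_inner[OF assms(1)] using blk_kI assms by simp
qed

lemma blk_kIQ: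
  assumes "Q \<in> carrier_mat n n" "a < 2" "b < 2"
  shows "blk n a b (kron (1\<^sub>m 2) Q) = (if a = b then Q else 0\<^sub>m n n)"
  using blk_kI assms by simp


lemma proj_ones_carrier: "proj_ones k \<in> carrier_mat (2^k) (2^k)"
  unfolding proj_ones_def carrier_mat_def by simp

lemma proj_ones_dims[simp]: "dim_row (proj_ones k) = 2^k" "dim_col (proj_ones k) = 2^k"
  unfolding proj_ones_def by simp_all

lemma proj_ones_entry: "u < 2^k \<Longrightarrow> v < 2^k \<Longrightarrow> proj_ones k $$ (u,v) = (if u = v \<and> u = 2^k - 1 then 1 else 0)"
  unfolding proj_ones_def using qbit_one_iff[of u k] by simp

lemma divmod_eq_iff: "(i div L = j div L \<and> i mod L = j mod L) \<longleftrightarrow> i = j" for i j L :: nat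
  by (metis div_mult_mod_eq)

lemma PI_entry:
  assumes "k \<le> w" "i < 2^w" "j < 2^w"
  shows "kron (proj_ones k) (1\<^sub>m (2^(w-k))) $$ (i,j) = (if i = j \<and> i div 2^(w-k) = 2^k - 1 then 1 else 0)"
proof -
  let ?K = "2^k :: nat" and ?L = "2^(w-k) :: nat"
  have ij: "i < ?K * ?L" "j < ?K * ?L" using assms KL[OF assms(1)] by auto
  have dv: "i div ?L < ?K" "j div ?L < ?K" using ij by (simp_all add: less_mult_imp_div_less)
  have "kron (proj_ones k) (1\<^sub>m ?L) $$ (i,j) = proj_ones k $$ (i div ?L, j div ?L) * 1\<^sub>m ?L $$ (i mod ?L, j mod ?L)"
    using kron_entry[of i "proj_ones k" "1\<^sub>m ?L" j] proj_ones_carrier[of k] ij by simp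
  also have "\<dots> = (if (i div ?L = j div ?L \<and> i mod ?L = j mod ?L) \<and> i div ?L = ?K - 1 then 1 else 0)"
    using proj_ones_entry[OF dv] by auto
  finally show ?thesis unfolding divmod_eq_iff .
qed

lemma PmI_entry:
  assumes "k \<le> w" "i < 2^w" "j < 2^w"
  shows "kron (1\<^sub>m (2^k) - proj_ones k) (1\<^sub>m (2^(w-k))) $$ (i,j) = (if i = j \<and> i div 2^(w-k) \<noteq> 2^k - 1 then 1 else 0)"
proof -
  let ?K = "2^k :: nat" and ?L = "2^(w-k) :: nat"
  have ij: "i < ?K * ?L" "j < ?K * ?L" using assms KL[OF assms(1)] by auto
  have dv: "i div ?L < ?K" "j div ?L < ?K" using ij by (simp_all add: less_mult_imp_div_less)
  have c: "1\<^sub>m ?K - proj_ones k \<in> carrier_mat ?K ?K" by (rule minus_carrier_mat[OF proj_ones_carrier])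
  have "kron (1\<^sub>m ?K - proj_ones k) (1\<^sub>m ?L) $$ (i,j) = (1\<^sub>m ?K - proj_ones k) $$ (i div ?L, j div ?L) * 1\<^sub>m ?L $$ (i mod ?L, j mod ?L)"
    using kron_entry[of i "1\<^sub>m ?K - proj_ones k" "1\<^sub>m ?L" j] c ij by simp
  also have "\<dots> = (if (i div ?L = j div ?L \<and> i mod ?L = j mod ?L) \<and> i div ?L \<noteq> ?K - 1 then 1 else 0)"
    using proj_ones_entry[OF dv] dv proj_ones_carrier[of k] by auto
  finally show ?thesis unfolding divmod_eq_iff .
qed

definition hh :: complex where "hh = complex_of_real (1 / sqrt 2)"

definition cc :: "nat \<Rightarrow> nat \<Rightarrow> nat \<Rightarrow> nat \<Rightarrow> nat \<Rightarrow> complex" where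
  "cc w k a b i = (if i div 2^(w-k) = 2^k - 1 then (if a = 1 \<and> b = 1 then - hh else hh) else (if a = b then 1 else 0))"

lemma hadamard_carrier: "hadamard \<in> carrier_mat 2 2"
  unfolding hadamard_def carrier_mat_def by simp

lemma hadamard_entry: "a < 2 \<Longrightarrow> b < 2 \<Longrightarrow> hadamard $$ (a,b) = (if a = 1 \<and> b = 1 then - hh else hh)"
  unfolding hadamard_def hh_def by simp

lemma blk_CkH:
  assumes "k \<le> w" "a < 2" "b < 2"
  shows "blk (2^w) a b (CkH w k) = dg (2^w) (cc w k a b)"
proof (rule eq_matI)
  let ?K = "2^k :: nat" and ?L = "2^(w-k) :: nat" and ?N = "2^w :: nat"
  let ?PI = "kron (proj_ones k) (1\<^sub>m ?L)" and ?PmI = "kron (1\<^sub>m ?K - proj_ones k) (1\<^sub>m ?L)"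
  have c1: "?PI \<in> carrier_mat ?N ?N"
    using kron_carrier[OF proj_ones_carrier[of k], of "1\<^sub>m ?L" ?L ?L] KL[OF assms(1)] by simp
  have c2: "?PmI \<in> carrier_mat ?N ?N"
  proof -
    have "1\<^sub>m ?K - proj_ones k \<in> carrier_mat ?K ?K" by (rule minus_carrier_mat[OF proj_ones_carrier])
    moreover have "1\<^sub>m ?L \<in> carrier_mat ?L ?L" by simp
    ultimately have "?PmI \<in> carrier_mat (?K*?L) (?K*?L)" by (rule kron_carrier)
    then show ?thesis using KL[OF assms(1)] by simp
  qed
  have c3: "kron (1\<^sub>m 2) ?PmI \<in> carrier_mat (2*?N) (2*?N)"
    using kron_carrier[OF _ c2, of "1\<^sub>m 2" 2 2] by simp
  fix i j assume "i < dim_row (dg ?N (cc w k a b))" "j < dim_col (dg ?N (cc w k a b))"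
  then have ij: "i < ?N" "j < ?N" by auto
  have ai: "a*?N+i < 2*?N" using assms(2) ij by (cases a) auto
  have bj: "b*?N+j < 2*?N" using assms(3) ij by (cases b) auto
  have "blk ?N a b (CkH w k) $$ (i,j) = CkH w k $$ (a*?N+i, b*?N+j)" using ij by (simp add: blk_entry)
  also have "\<dots> = kron hadamard ?PI $$ (a*?N+i, b*?N+j) + kron (1\<^sub>m 2) ?PmI $$ (a*?N+i, b*?N+j)"
    unfolding CkH_def using c3 ai bj by (intro index_add_mat(1)) auto
  also have "\<dots> = hadamard $$ (a,b) * ?PI $$ (i,j) + 1\<^sub>m 2 $$ (a,b) * ?PmI $$ (i,j)"
    using kron2_entry[OF hadamard_carrier c1 assms(2,3) ij] kron2_entry[OF _ c2 assms(2,3) ij, of "1\<^sub>m 2"] by simp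
  also have "\<dots> = dg ?N (cc w k a b) $$ (i,j)"
    using ij assms by (simp add: PI_entry PmI_entry hadamard_entry dg_entry cc_def)
  finally show "blk ?N a b (CkH w k) $$ (i,j) = dg ?N (cc w k a b) $$ (i,j)" .
qed auto


definition zz :: "nat \<Rightarrow> nat \<Rightarrow> nat \<Rightarrow> complex" where
  "zz w a m = (if a = 1 \<and> 2^(w-1) \<le> m then -1 else 1)"

lemma qbit_blk:
  assumes "1 \<le> w" "a < 2" "i < 2^w"
  shows "qbit (w+1) (a*2^w+i) 0 = a" "qbit (w+1) (a*2^w+i) 1 = (if 2^(w-1) \<le> i then 1 else 0)"
proof -
  show "qbit (w+1) (a*2^w+i) 0 = a" unfolding qbit_def using divmod_lin[OF assms(3), of a] assms(2) by simp
  let ?h = "2^(w-1) :: nat"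
  have N: "(2::nat)^w = 2 * ?h" using assms(1) by (metis Suc_diff_le diff_Suc_1 power_Suc)
  have "i div ?h < 2" using assms(3) N by (simp add: less_mult_imp_div_less)
  have e: "a*2^w+i = (2*a + i div ?h) * ?h + i mod ?h" using N by (simp add: algebra_simps)
  have "(a*2^w+i) div ?h = 2*a + i div ?h" unfolding e using divmod_lin[of "i mod ?h" ?h] by simp
  moreover have "i div ?h = (if ?h \<le> i then 1 else 0)"
  proof -
    have d: "i div ?h = 0 \<or> i div ?h = 1" using \<open>i div ?h < 2\<close> by linarith
    have z: "i div ?h = 0 \<longleftrightarrow> i < ?h" by (simp add: div_eq_0_iff)
    show ?thesis using d z by auto
  qed
  ultimately show "qbit (w+1) (a*2^w+i) 1 = (if 2^(w-1) \<le> i then 1 else 0)"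
    unfolding qbit_def by simp
qed

lemma blk_CZ:
  assumes "1 \<le> w" "a < 2" "b < 2"
  shows "blk (2^w) a b (CZ_OQ1 w) = (if a = b then dg (2^w) (zz w a) else 0\<^sub>m (2^w) (2^w))"
proof (rule eq_matI)
  let ?N = "2^w :: nat"
  fix i j assume "i < dim_row (if a = b then dg ?N (zz w a) else 0\<^sub>m ?N ?N)"
    "j < dim_col (if a = b then dg ?N (zz w a) else 0\<^sub>m ?N ?N)"
  then have ij: "i < ?N" "j < ?N" by (auto split: if_splits)
  have ai: "a*?N+i < 2^(w+1)" using assms(2) ij by (cases a) auto
  have bj: "b*?N+j < 2^(w+1)" using assms(3) ij by (cases b) auto
  have eq: "a*?N+i = b*?N+j \<longleftrightarrow> a = b \<and> i = j"
    using divmod_lin[OF ij(1), of a] divmod_lin[OF ij(2), of b] by metis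
  have "blk ?N a b (CZ_OQ1 w) $$ (i,j) = CZ_OQ1 w $$ (a*?N+i, b*?N+j)" using ij by (simp add: blk_entry)
  also have "\<dots> = (if a*?N+i = b*?N+j then (if qbit (w+1) (a*?N+i) 0 = 1 \<and> qbit (w+1) (a*?N+i) 1 = 1 then - 1 else 1) else 0)"
    unfolding CZ_OQ1_def by (rule trans[OF index_mat(1)[OF ai bj]], simp only: prod.case)
  also have "\<dots> = (if a = b then dg ?N (zz w a) else 0\<^sub>m ?N ?N) $$ (i,j)"
    unfolding eq using qbit_blk[OF assms(1,2) ij(1)] ij by (auto simp: dg_entry zz_def)
  finally show "blk ?N a b (CZ_OQ1 w) $$ (i,j) = (if a = b then dg ?N (zz w a) else 0\<^sub>m ?N ?N) $$ (i,j)" .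
qed (auto)



lemma adj_carrier: "Q \<in> carrier_mat n n \<Longrightarrow> adj Q \<in> carrier_mat n n"
  unfolding adj_def carrier_mat_def by simp

lemma adj_entry: "Q \<in> carrier_mat n n \<Longrightarrow> i < n \<Longrightarrow> j < n \<Longrightarrow> adj Q $$ (i,j) = cnj (Q $$ (j,i))"
  unfolding adj_def carrier_mat_def by simp

lemma chain_entry:
  assumes K: "K > 0" and L: "L > 0" and Q: "Q \<in> carrier_mat (K*L) (K*L)" and ij: "i < K*L" "j < K*L"
  shows "(((((dg (K*L) d1 * Xp K L) * adj Q) * dg (K*L) z) * Q) * (Xp K L * dg (K*L) d2)) $$ (i,j)
     = d1 i * d2 j * (\<Sum>m<K*L. cnj (Q $$ (m, sig K L i)) * z m * Q $$ (m, sig K L j))"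
proof -
  let ?n = "K*L"
  let ?D1 = "dg ?n d1" and ?D2 = "dg ?n d2" and ?Z = "dg ?n z" and ?X = "Xp K L" and ?A = "adj Q"
  have cA: "?A \<in> carrier_mat ?n ?n" using adj_carrier[OF Q] .
  have s: "sig K L i < ?n" "sig K L j < ?n" using sig_props(1)[OF K L] ij by auto
  have e2: "(?D1 * ?X) * ?A = ?D1 * (?X * ?A)"
    by (rule assoc_mult_mat[OF dg_carrier Xp_carrier cA])
  have A2: "((?D1 * ?X) * ?A) $$ (i,m) = d1 i * cnj (Q $$ (m, sig K L i))" if m: "m < ?n" for m
  proof -
    have "((?D1 * ?X) * ?A) $$ (i,m) = d1 i * (?X * ?A) $$ (i,m)"
      unfolding e2 using ij m by (intro dg_left) (auto intro: mult_carrier_mat[OF Xp_carrier cA])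
    also have "(?X * ?A) $$ (i,m) = ?A $$ (sig K L i, m)" using Xp_left[OF K L cA ij(1) m] .
    also have "\<dots> = cnj (Q $$ (m, sig K L i))" using adj_entry[OF Q s(1) m] .
    finally show ?thesis .
  qed
  have c2: "(?D1 * ?X) * ?A \<in> carrier_mat ?n ?n"
    by (intro mult_carrier_mat[OF mult_carrier_mat[OF dg_carrier Xp_carrier] cA])
  have A3: "((?D1 * ?X) * ?A * ?Z) $$ (i,m) = d1 i * cnj (Q $$ (m, sig K L i)) * z m" if m: "m < ?n" for m
    using dg_right[OF c2 ij(1) m] A2[OF m] by simp
  have c3: "(?D1 * ?X) * ?A * ?Z \<in> carrier_mat ?n ?n" by (intro mult_carrier_mat[OF c2 dg_carrier])
  have c4: "(?D1 * ?X) * ?A * ?Z * Q \<in> carrier_mat ?n ?n" by (intro mult_carrier_mat[OF c3 Q])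
  have A4: "((?D1 * ?X) * ?A * ?Z * Q) $$ (i,t) = d1 i * (\<Sum>m<?n. cnj (Q $$ (m, sig K L i)) * z m * Q $$ (m,t))"
    if t: "t < ?n" for t
  proof -
    have "((?D1 * ?X) * ?A * ?Z * Q) $$ (i,t) = (\<Sum>m<?n. ((?D1 * ?X) * ?A * ?Z) $$ (i,m) * Q $$ (m,t))"
      by (rule mult_entry[OF c3 Q ij(1) t])
    also have "\<dots> = (\<Sum>m<?n. d1 i * (cnj (Q $$ (m, sig K L i)) * z m * Q $$ (m,t)))"
      by (intro sum.cong refl) (simp add: A3 mult.assoc)
    finally show ?thesis by (simp add: sum_distrib_left)
  qed
  have e5: "((?D1 * ?X) * ?A * ?Z * Q) * (?X * ?D2) = (((?D1 * ?X) * ?A * ?Z * Q) * ?X) * ?D2"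
    by (rule assoc_mult_mat[OF c4 Xp_carrier dg_carrier, symmetric])
  have c5: "((?D1 * ?X) * ?A * ?Z * Q) * ?X \<in> carrier_mat ?n ?n" by (intro mult_carrier_mat[OF c4 Xp_carrier])
  have "(((((?D1 * ?X) * ?A) * ?Z) * Q) * (?X * ?D2)) $$ (i,j) = (((?D1 * ?X) * ?A * ?Z * Q) * ?X) $$ (i,j) * d2 j"
    unfolding e5 by (rule dg_right[OF c5 ij])
  also have "(((?D1 * ?X) * ?A * ?Z * Q) * ?X) $$ (i,j) = ((?D1 * ?X) * ?A * ?Z * Q) $$ (i, sig K L j)"
    by (rule Xp_right[OF K L c4 ij])
  also have "\<dots> = d1 i * (\<Sum>m<?n. cnj (Q $$ (m, sig K L i)) * z m * Q $$ (m, sig K L j))"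
    by (rule A4[OF s(2)])
  finally show ?thesis by (simp add: algebra_simps)
qed


definition Sz :: "nat \<Rightarrow> complex mat \<Rightarrow> nat \<Rightarrow> nat \<Rightarrow> nat \<Rightarrow> complex" where
  "Sz w Q a r s = (\<Sum>m<2^w. cnj (Q $$ (m, r)) * zz w a m * Q $$ (m, s))"

lemma R_entry:
  assumes Q: "Q \<in> carrier_mat (2^w) (2^w)" and k1: "1 \<le> k" and kw: "k \<le> w"
    and ij: "i < 2^w" "j < 2^w"
  shows "circuit_R w k Q $$ (i,j) =
    cc w k 0 0 i * cc w k 0 0 j * Sz w Q 0 (sig (2^k) (2^(w-k)) i) (sig (2^k) (2^(w-k)) j)
  + cc w k 0 1 i * cc w k 1 0 j * Sz w Q 1 (sig (2^k) (2^(w-k)) i) (sig (2^k) (2^(w-k)) j)"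
proof -
  let ?N = "2^w :: nat" and ?K = "2^k :: nat" and ?L = "2^(w-k) :: nat"
  have w1: "1 \<le> w" using k1 kw by simp
  have KLN: "?K * ?L = ?N" using KL[OF kw] .
  have cC: "CkH w k \<in> carrier_mat (2*?N) (2*?N)"
    unfolding CkH_def carrier_mat_def using KLN by (simp add: hadamard_def proj_ones_def)
  have cX: "X_Q w k \<in> carrier_mat (2*?N) (2*?N)"
    unfolding X_Q_def carrier_mat_def using KLN kron_pow_X[of k] by auto
  have cA: "kron (1\<^sub>m 2) (adj Q) \<in> carrier_mat (2*?N) (2*?N)"
    using kron_carrier[OF _ adj_carrier[OF Q], of "1\<^sub>m 2" 2 2] by simp
  have cQ: "kron (1\<^sub>m 2) Q \<in> carrier_mat (2*?N) (2*?N)"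
    using kron_carrier[OF _ Q, of "1\<^sub>m 2" 2 2] by simp
  have cZ: "CZ_OQ1 w \<in> carrier_mat (2*?N) (2*?N)"
    unfolding CZ_OQ1_def carrier_mat_def by simp
  have cXp: "Xp ?K ?L \<in> carrier_mat ?N ?N" using Xp_carrier[of ?K ?L] KLN by simp
  have bX: "blk ?N a b (X_Q w k) = (if a = b then Xp ?K ?L else 0\<^sub>m ?N ?N)" if "a < 2" "b < 2" for a b
    using blk_XQ[OF kw that] .
  have bA: "blk ?N a b (kron (1\<^sub>m 2) (adj Q)) = (if a = b then adj Q else 0\<^sub>m ?N ?N)" if "a < 2" "b < 2" for a b
    using blk_kIQ[OF adj_carrier[OF Q] that] .
  have bQ: "blk ?N a b (kron (1\<^sub>m 2) Q) = (if a = b then Q else 0\<^sub>m ?N ?N)" if "a < 2" "b < 2" for a b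
    using blk_kIQ[OF Q that] .
  have bZ: "blk ?N a b (CZ_OQ1 w) = (if a = b then dg ?N (zz w a) else 0\<^sub>m ?N ?N)" if "a < 2" "b < 2" for a b
    using blk_CZ[OF w1 that] .
  have bC: "blk ?N a b (CkH w k) = dg ?N (cc w k a b)" if "a < 2" "b < 2" for a b
    using blk_CkH[OF kw that] .
  define T1 where "T1 = CkH w k * X_Q w k"
  define T2 where "T2 = T1 * kron (1\<^sub>m 2) (adj Q)"
  define T3 where "T3 = T2 * CZ_OQ1 w"
  define T4 where "T4 = T3 * kron (1\<^sub>m 2) Q"
  define V where "V = X_Q w k * CkH w k"
  have c1: "T1 \<in> carrier_mat (2*?N) (2*?N)" unfolding T1_def using cC cX by (rule mult_carrier_mat)
  have c2: "T2 \<in> carrier_mat (2*?N) (2*?N)" unfolding T2_def using c1 cA by (rule mult_carrier_mat)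
  have c3: "T3 \<in> carrier_mat (2*?N) (2*?N)" unfolding T3_def using c2 cZ by (rule mult_carrier_mat)
  have c4: "T4 \<in> carrier_mat (2*?N) (2*?N)" unfolding T4_def using c3 cQ by (rule mult_carrier_mat)
  have cV: "V \<in> carrier_mat (2*?N) (2*?N)" unfolding V_def using cX cC by (rule mult_carrier_mat)
  have b1: "blk ?N a b T1 = dg ?N (cc w k a b) * Xp ?K ?L" if "a < 2" "b < 2" for a b
    unfolding T1_def using blk_diag_right[OF cC cX that] bX bC that by simp
  have b2: "blk ?N a b T2 = dg ?N (cc w k a b) * Xp ?K ?L * adj Q" if "a < 2" "b < 2" for a b
    unfolding T2_def using blk_diag_right[OF c1 cA that] bA b1 that by simp
  have b3: "blk ?N a b T3 = dg ?N (cc w k a b) * Xp ?K ?L * adj Q * dg ?N (zz w b)" if "a < 2" "b < 2" for a b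
    unfolding T3_def using blk_diag_right[OF c2 cZ that] bZ b2 that by simp
  have b4: "blk ?N a b T4 = dg ?N (cc w k a b) * Xp ?K ?L * adj Q * dg ?N (zz w b) * Q" if "a < 2" "b < 2" for a b
    unfolding T4_def using blk_diag_right[OF c3 cQ that] bQ b3 that by simp
  have bV: "blk ?N a b V = Xp ?K ?L * dg ?N (cc w k a b)" if "a < 2" "b < 2" for a b
    unfolding V_def using blk_diag_left[OF cX cC that] bX bC that by simp
  have R: "circuit_R w k Q = T4 * V"
    unfolding circuit_R_def T4_def T3_def T2_def T1_def V_def ..
  have "circuit_R w k Q $$ (i,j) = blk ?N 0 0 (T4 * V) $$ (i,j)" using ij R by (simp add: blk_entry)
  also have "blk ?N 0 0 (T4 * V) = blk ?N 0 0 T4 * blk ?N 0 0 V + blk ?N 0 1 T4 * blk ?N 1 0 V"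
    using blk_mult[OF c4 cV] by simp
  also have "\<dots> $$ (i,j) = (blk ?N 0 0 T4 * blk ?N 0 0 V) $$ (i,j) + (blk ?N 0 1 T4 * blk ?N 1 0 V) $$ (i,j)"
    using ij by simp
  also have "(blk ?N 0 0 T4 * blk ?N 0 0 V) $$ (i,j) =
      cc w k 0 0 i * cc w k 0 0 j * Sz w Q 0 (sig ?K ?L i) (sig ?K ?L j)"
    unfolding b4[of 0 0, simplified] bV[of 0 0, simplified] Sz_def
    using chain_entry[of ?K ?L Q i j "cc w k 0 0" "zz w 0" "cc w k 0 0"] Q ij unfolding KLN by simp
  also have "(blk ?N 0 1 T4 * blk ?N 1 0 V) $$ (i,j) =
      cc w k 0 1 i * cc w k 1 0 j * Sz w Q 1 (sig ?K ?L i) (sig ?K ?L j)"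
  proof -
    have e1: "blk ?N 0 1 T4 = dg ?N (cc w k 0 1) * Xp ?K ?L * adj Q * dg ?N (zz w 1) * Q" using b4[of 0 1] by simp
    have e2: "blk ?N 1 0 V = Xp ?K ?L * dg ?N (cc w k 1 0)" using bV[of 1 0] by simp
    show ?thesis unfolding e1 e2 Sz_def
    using chain_entry[of ?K ?L Q i j "cc w k 0 1" "zz w 1" "cc w k 1 0"] Q ij unfolding KLN by simp
  qed
  finally show ?thesis .
qed



lemma diag_mat_dg: "mat n n (\<lambda>(x,y). if x = y \<and> P x then c else 0) = dg n (\<lambda>x. if P x then c else 0)"
  by (rule eq_matI) (auto simp: dg_def)

lemma trace_diag:
  assumes U: "U \<in> carrier_mat n n" and c: "Im c = 0"
  shows "Re (mtrace (mat n n (\<lambda>(x,y). if x = y \<and> P x then 1 else 0) * U * mat n n (\<lambda>(x,y). if x = y \<and> S x then c else 0) * adj U))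
    = (\<Sum>i<n. \<Sum>l<n. if P i \<and> S l then Re c * (cmod (U $$ (i,l)))\<^sup>2 else 0)"
proof -
  let ?D1 = "dg n (\<lambda>x. if P x then 1 else 0)" and ?D2 = "dg n (\<lambda>x. if S x then c else 0)"
  have cA: "adj U \<in> carrier_mat n n" using adj_carrier[OF U] .
  have c1: "?D1 * U \<in> carrier_mat n n" using dg_carrier U by (rule mult_carrier_mat)
  have c2: "?D1 * U * ?D2 \<in> carrier_mat n n" using c1 dg_carrier by (rule mult_carrier_mat)
  have e2: "(?D1 * U * ?D2) $$ (i,l) = (if P i \<and> S l then c * U $$ (i,l) else 0)" if "i < n" "l < n" for i l
    using dg_right[OF c1 that] dg_left[OF U that] by simp
  have "mtrace (?D1 * U * ?D2 * adj U) = (\<Sum>i<n. (?D1 * U * ?D2 * adj U) $$ (i,i))"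
    unfolding mtrace_def using c2 cA by simp
  also have "\<dots> = (\<Sum>i<n. \<Sum>l<n. (if P i \<and> S l then c * U $$ (i,l) else 0) * cnj (U $$ (i,l)))"
  proof (intro sum.cong refl)
    fix i assume "i \<in> {..<n}"
    then have i: "i < n" by simp
    have "(?D1 * U * ?D2 * adj U) $$ (i,i) = (\<Sum>l<n. (?D1 * U * ?D2) $$ (i,l) * adj U $$ (l,i))"
      by (rule mult_entry[OF c2 cA i i])
    also have "\<dots> = (\<Sum>l<n. (if P i \<and> S l then c * U $$ (i,l) else 0) * cnj (U $$ (i,l)))"
    proof (intro sum.cong refl)
      fix l assume "l \<in> {..<n}"
      then have l: "l < n" by simp
      show "(?D1 * U * ?D2) $$ (i,l) * adj U $$ (l,i) = (if P i \<and> S l then c * U $$ (i,l) else 0) * cnj (U $$ (i,l))"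
        using e2[OF i l] adj_entry[OF U l i] by (simp only:)
    qed
    finally show "(?D1 * U * ?D2 * adj U) $$ (i,i) = (\<Sum>l<n. (if P i \<and> S l then c * U $$ (i,l) else 0) * cnj (U $$ (i,l)))" .
  qed
  finally have "Re (mtrace (?D1 * U * ?D2 * adj U)) = (\<Sum>i<n. \<Sum>l<n. Re ((if P i \<and> S l then c * U $$ (i,l) else 0) * cnj (U $$ (i,l))))"
    by (simp add: Re_sum)
  also have "\<dots> = (\<Sum>i<n. \<Sum>l<n. if P i \<and> S l then Re c * (cmod (U $$ (i,l)))\<^sup>2 else 0)"
  proof (intro sum.cong refl)
    fix i l
    have "c * U $$ (i,l) * cnj (U $$ (i,l)) = c * complex_of_real ((cmod (U $$ (i,l)))\<^sup>2)"
      using complex_norm_square[of "U $$ (i,l)"] by (simp add: mult.assoc)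
    moreover have "c = complex_of_real (Re c)" using c by (simp add: complex_eq_iff)
    ultimately have "Re (c * U $$ (i,l) * cnj (U $$ (i,l))) = Re c * (cmod (U $$ (i,l)))\<^sup>2"
      by (metis Re_complex_of_real of_real_mult)
    then show "Re ((if P i \<and> S l then c * U $$ (i,l) else 0) * cnj (U $$ (i,l))) = (if P i \<and> S l then Re c * (cmod (U $$ (i,l)))\<^sup>2 else 0)"
      by simp
  qed
  finally show ?thesis unfolding diag_mat_dg .
qed

lemma sum_restrict: "n \<le> m \<Longrightarrow> (\<Sum>i<m. if i < n then f i else 0) = (\<Sum>i<n. f i)"
  for n m :: nat and f :: "nat \<Rightarrow> 'a::comm_monoid_add"
proof -
  assume "n \<le> m"
  then have "{i \<in> {..<m}. i < n} = {..<n}" by (auto intro: less_le_trans)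
  then show ?thesis using sum.inter_filter[of "{..<m}" f "\<lambda>i. i < n"] by simp
qed

lemma sum_reindex_block:
  fixes F :: "nat \<Rightarrow> 'a::comm_monoid_add"
  assumes "K > 0" "L > 0"
  shows "(\<Sum>l<K*L. if l div L = K - 1 then F (l mod L) else 0) = (\<Sum>r<L. F r)"
proof -
  let ?g = "\<lambda>l. if l div L = K - 1 then F (l mod L) else 0"
  have KL': "K*L = (K-1)*L + L" using assms by (cases K) auto
  have "(\<Sum>l<K*L. ?g l) = (\<Sum>l\<in>{0..<(K-1)*L}. ?g l) + (\<Sum>l\<in>{(K-1)*L..<K*L}. ?g l)"
    using KL' by (simp add: lessThan_atLeast0 sum.atLeastLessThan_concat)
  also have "(\<Sum>l\<in>{0..<(K-1)*L}. ?g l) = 0"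
  proof (intro sum.neutral ballI)
    fix l assume "l \<in> {0..<(K-1)*L}"
    then have "l div L < K - 1" by (simp add: less_mult_imp_div_less)
    then show "?g l = 0" by simp
  qed
  also have "(\<Sum>l\<in>{(K-1)*L..<K*L}. ?g l) = (\<Sum>r\<in>{0..<L}. ?g (r + (K-1)*L))"
    using sum.shift_bounds_nat_ivl[of ?g 0 "(K-1)*L" L] KL' by (simp add: add.commute)
  also have "\<dots> = (\<Sum>r\<in>{0..<L}. F r)"
  proof (intro sum.cong refl)
    fix r assume "r \<in> {0..<L}"
    then have "r < L" by simp
    then have "(r + (K-1)*L) div L = K - 1" "(r + (K-1)*L) mod L = r"
      using divmod_lin[of r L "K-1"] by (simp_all add: add.commute)
    then show "?g (r + (K-1)*L) = F r" by simp
  qed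
  finally show ?thesis by (simp add: lessThan_atLeast0)
qed



definition G :: "nat \<Rightarrow> complex mat \<Rightarrow> nat \<Rightarrow> nat \<Rightarrow> complex" where
  "G w Q r s = (\<Sum>m<2^w. if m < 2^(w-1) then cnj (Q $$ (m,r)) * Q $$ (m,s) else 0)"

definition gd :: "nat \<Rightarrow> complex mat \<Rightarrow> nat \<Rightarrow> real" where
  "gd w Q r = (\<Sum>m<2^w. if m < 2^(w-1) then (cmod (Q $$ (m,r)))\<^sup>2 else 0)"

lemma unitary_cols:
  assumes "unitary n Q" "r < n" "s < n"
  shows "(\<Sum>m<n. cnj (Q $$ (m,r)) * Q $$ (m,s)) = (if r = s then 1 else 0)"
proof -
  have Q: "Q \<in> carrier_mat n n" and e: "adj Q * Q = 1\<^sub>m n" using assms(1) unfolding unitary_def by auto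
  have "(adj Q * Q) $$ (r,s) = (\<Sum>m<n. adj Q $$ (r,m) * Q $$ (m,s))"
    by (rule mult_entry[OF adj_carrier[OF Q] Q assms(2,3)])
  also have "\<dots> = (\<Sum>m<n. cnj (Q $$ (m,r)) * Q $$ (m,s))"
    by (intro sum.cong refl) (simp add: adj_entry[OF Q] assms)
  finally show ?thesis using e assms by simp
qed

lemma unitary_rows:
  assumes "unitary n Q" "m < n" "m' < n"
  shows "(\<Sum>s<n. Q $$ (m,s) * cnj (Q $$ (m',s))) = (if m = m' then 1 else 0)"
proof -
  have Q: "Q \<in> carrier_mat n n" and e: "Q * adj Q = 1\<^sub>m n" using assms(1) unfolding unitary_def by auto
  have "(Q * adj Q) $$ (m,m') = (\<Sum>s<n. Q $$ (m,s) * adj Q $$ (s,m'))"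
    by (rule mult_entry[OF Q adj_carrier[OF Q] assms(2,3)])
  also have "\<dots> = (\<Sum>s<n. Q $$ (m,s) * cnj (Q $$ (m',s)))"
    by (intro sum.cong refl) (simp add: adj_entry[OF Q] assms)
  finally show ?thesis using e assms by simp
qed

lemma Sz0:
  assumes "unitary (2^w) Q" "r < 2^w" "s < 2^w"
  shows "Sz w Q 0 r s = (if r = s then 1 else 0)"
  unfolding Sz_def zz_def using unitary_cols[OF assms] by simp

lemma Sz01:
  shows "Sz w Q 0 r s + Sz w Q 1 r s = 2 * G w Q r s"
proof -
  have "Sz w Q 0 r s + Sz w Q 1 r s = (\<Sum>m<2^w. cnj (Q $$ (m, r)) * zz w 0 m * Q $$ (m, s) + cnj (Q $$ (m, r)) * zz w 1 m * Q $$ (m, s))"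
    unfolding Sz_def by (simp add: sum.distrib)
  also have "\<dots> = (\<Sum>m<2^w. 2 * (if m < 2^(w-1) then cnj (Q $$ (m,r)) * Q $$ (m,s) else 0))"
    by (intro sum.cong refl) (auto simp: zz_def)
  finally show ?thesis unfolding G_def by (simp add: sum_distrib_left)
qed

lemma G_diag: "G w Q r r = complex_of_real (gd w Q r)"
  unfolding G_def gd_def of_real_sum
  by (intro sum.cong refl) (simp add: complex_norm_square mult.commute del: of_real_power)

lemma gd_nonneg: "0 \<le> gd w Q r"
  unfolding gd_def by (intro sum_nonneg) auto

lemma G_rowsum:
  assumes U: "unitary (2^w) Q" and r: "r < 2^w"
  shows "(\<Sum>s<2^w. (cmod (G w Q r s))\<^sup>2) = gd w Q r"
proof -
  let ?N = "2^w :: nat"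
  define a where "a m = (if m < 2^(w-1) then cnj (Q $$ (m,r)) else 0)" for m
  have Gs: "G w Q r s = (\<Sum>m<?N. a m * Q $$ (m,s))" for s
    unfolding G_def a_def by (intro sum.cong refl) auto
  have "complex_of_real (\<Sum>s<?N. (cmod (G w Q r s))\<^sup>2) = (\<Sum>s<?N. G w Q r s * cnj (G w Q r s))"
    unfolding of_real_sum by (intro sum.cong refl) (simp add: complex_norm_square del: of_real_power)
  also have "\<dots> = (\<Sum>s<?N. \<Sum>m<?N. \<Sum>m'<?N. a m * cnj (a m') * (Q $$ (m,s) * cnj (Q $$ (m',s))))"
    unfolding Gs cnj_sum sum_product by (simp add: algebra_simps)
  also have "\<dots> = (\<Sum>m<?N. \<Sum>s<?N. \<Sum>m'<?N. a m * cnj (a m') * (Q $$ (m,s) * cnj (Q $$ (m',s))))"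
    by (rule sum.swap)
  also have "\<dots> = (\<Sum>m<?N. \<Sum>m'<?N. \<Sum>s<?N. a m * cnj (a m') * (Q $$ (m,s) * cnj (Q $$ (m',s))))"
    by (intro sum.cong refl sum.swap)
  also have "\<dots> = (\<Sum>m<?N. \<Sum>m'<?N. a m * cnj (a m') * (if m = m' then 1 else 0))"
    by (intro sum.cong refl) (simp add: sum_distrib_left[symmetric] unitary_rows[OF U])
  also have "\<dots> = (\<Sum>m<?N. a m * cnj (a m))"
    by (intro sum.cong refl) (simp add: if_distrib[of "(*) _"] cong: if_cong)
  also have "\<dots> = complex_of_real (gd w Q r)"
    unfolding gd_def of_real_sum a_def by (intro sum.cong refl) (simp add: complex_norm_square del: of_real_power)
  finally show ?thesis by (simp only: of_real_eq_iff)
qed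



lemma hh_sq: "hh * hh = 1/2"
  unfolding hh_def by (simp flip: of_real_mult)

lemma R_mod:
  assumes U: "unitary (2^w) Q" and k1: "1 \<le> k" and kw: "k \<le> w" and il: "i < 2^w" "l < 2^w"
  shows "(cmod (circuit_R w k Q $$ (i,l)))\<^sup>2 =
    (if i div 2^(w-k) = 2^k - 1 then (if l div 2^(w-k) = 2^k - 1 then (cmod (G w Q (sig (2^k) (2^(w-k)) i) (sig (2^k) (2^(w-k)) l)))\<^sup>2 else 0)
     else (if i = l then 1 else 0))"
proof -
  let ?K = "2^k :: nat" and ?L = "2^(w-k) :: nat"
  let ?s = "sig ?K ?L"
  have Q: "Q \<in> carrier_mat (2^w) (2^w)" using U unfolding unitary_def by auto
  have KLN: "?K * ?L = 2^w" using KL[OF kw] .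
  have K0: "?K > 0" and L0: "?L > 0" by simp_all
  have il': "i < ?K * ?L" "l < ?K * ?L" using il KLN by auto
  have si: "?s i < 2^w" "?s l < 2^w" using sig_props(1)[OF K0 L0] il' KLN by auto
  have inj: "?s i = ?s l \<longleftrightarrow> i = l" using sig_props(4)[OF K0 L0] il' by metis
  have S0: "Sz w Q 0 (?s i) (?s l) = (if i = l then 1 else 0)" using Sz0[OF U si] inj by simp
  have S1: "Sz w Q 1 (?s i) (?s l) = 2 * G w Q (?s i) (?s l) - (if i = l then 1 else 0)"
    using Sz01[of w Q "?s i" "?s l"] S0 by (simp add: algebra_simps)
  have c00: "cc w k 0 0 x = (if x div ?L = ?K - 1 then hh else 1)" for x by (simp add: cc_def)
  have c01: "cc w k 0 1 x = (if x div ?L = ?K - 1 then hh else 0)" for x by (simp add: cc_def)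
  have c10: "cc w k 1 0 x = (if x div ?L = ?K - 1 then hh else 0)" for x by (simp add: cc_def)
  have R: "circuit_R w k Q $$ (i,l) = cc w k 0 0 i * cc w k 0 0 l * Sz w Q 0 (?s i) (?s l)
      + cc w k 0 1 i * cc w k 1 0 l * Sz w Q 1 (?s i) (?s l)"
    using R_entry[OF Q k1 kw il] .
  show ?thesis
  proof (cases "i div ?L = ?K - 1")
    case pi: True
    show ?thesis
    proof (cases "l div ?L = ?K - 1")
      case pl: True
      have "circuit_R w k Q $$ (i,l) = hh * hh * (Sz w Q 0 (?s i) (?s l) + Sz w Q 1 (?s i) (?s l))"
        unfolding R c00 c01 c10 using pi pl by (simp add: algebra_simps)
      also have "\<dots> = G w Q (?s i) (?s l)" unfolding Sz01 hh_sq by simp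
      finally show ?thesis using pi pl by simp
    next
      case pl: False
      then have "i \<noteq> l" using pi by auto
      then show ?thesis unfolding R c00 c01 c10 S0 using pi pl by simp
    qed
  next
    case pi: False
    show ?thesis
    proof (cases "i = l")
      case True
      then show ?thesis unfolding R c00 c01 c10 S0 using pi by simp
    next
      case False
      then show ?thesis unfolding R c00 c01 c10 S0 using pi by simp
    qed
  qed
qed



lemma cauchy_sum:
  fixes g :: "nat \<Rightarrow> real"
  shows "(\<Sum>r<L. g r)\<^sup>2 \<le> real L * (\<Sum>r<L. (g r)\<^sup>2)"
proof (cases "L = 0")
  case True then show ?thesis by simp
next
  case False
  define A where "A = (\<Sum>r<L. g r)"
  define m where "m = A / real L"
  have "0 \<le> (\<Sum>r<L. (g r - m)\<^sup>2)" by (intro sum_nonneg) auto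
  also have "(\<Sum>r<L. (g r - m)\<^sup>2) = (\<Sum>r<L. (g r)\<^sup>2) - 2 * m * A + real L * m\<^sup>2"
    unfolding power2_diff A_def by (simp add: sum.distrib sum_subtractf sum_distrib_left algebra_simps)
  also have "\<dots> = (\<Sum>r<L. (g r)\<^sup>2) - A\<^sup>2 / real L"
    using False unfolding m_def by (simp add: field_simps power2_eq_square)
  finally have "A\<^sup>2 / real L \<le> (\<Sum>r<L. (g r)\<^sup>2)" by simp
  then show ?thesis using False unfolding A_def by (simp add: field_simps)
qed

lemma final_alg:
  fixes K L N S A B p pR :: real
  assumes K: "K > 0" and L: "L > 0" and N: "N = K * L" and pR: "pR = (N - L + S) / N" and p: "p = A / L"
    and BS: "B \<le> S" and SA: "S \<le> A" and AB: "A\<^sup>2 \<le> L * B"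
  shows "1 - (1 - p\<^sup>2) / K \<le> pR \<and> pR \<le> 1 - (1 - p) / K"
proof -
  have pR': "pR = 1 - 1 / K + S / (K * L)" unfolding pR N using K L by (simp add: field_simps)
  have "L * B \<le> L * S" using BS L by simp
  then have "A\<^sup>2 \<le> L * S" using AB by linarith
  then have A2: "A\<^sup>2 / L \<le> S" using L by (simp add: field_simps)
  have "1 - (1 - p\<^sup>2) / K = 1 - 1 / K + (A\<^sup>2 / L) / (K * L)"
    unfolding p using K L by (simp add: field_simps power2_eq_square)
  also have "\<dots> \<le> 1 - 1 / K + S / (K * L)"
    using divide_right_mono[OF A2, of "K*L"] K L by simp
  finally have lo: "1 - (1 - p\<^sup>2) / K \<le> pR" unfolding pR' .
  have "pR \<le> 1 - 1 / K + A / (K * L)" unfolding pR' using SA K L by (simp add: divide_right_mono)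
  also have "\<dots> = 1 - (1 - p) / K" unfolding p using K L by (simp add: field_simps)
  finally show ?thesis using lo by simp
qed



lemma R_carrier:
  assumes Q: "Q \<in> carrier_mat (2^w) (2^w)" and kw: "k \<le> w"
  shows "circuit_R w k Q \<in> carrier_mat (2^(w+1)) (2^(w+1))"
proof -
  let ?N = "2^w :: nat"
  have KLN: "2^k * 2^(w-k) = ?N" using KL[OF kw] .
  have cC: "CkH w k \<in> carrier_mat (2*?N) (2*?N)"
    unfolding CkH_def carrier_mat_def using KLN by (simp add: hadamard_def proj_ones_def)
  have cX: "X_Q w k \<in> carrier_mat (2*?N) (2*?N)"
    unfolding X_Q_def carrier_mat_def using KLN kron_pow_X[of k] by auto
  have cA: "kron (1\<^sub>m 2) (adj Q) \<in> carrier_mat (2*?N) (2*?N)"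
    using kron_carrier[OF _ adj_carrier[OF Q], of "1\<^sub>m 2" 2 2] by simp
  have cQ: "kron (1\<^sub>m 2) Q \<in> carrier_mat (2*?N) (2*?N)"
    using kron_carrier[OF _ Q, of "1\<^sub>m 2" 2 2] by simp
  have cZ: "CZ_OQ1 w \<in> carrier_mat (2*?N) (2*?N)"
    unfolding CZ_OQ1_def carrier_mat_def by simp
  have "circuit_R w k Q \<in> carrier_mat (2*?N) (2*?N)"
    unfolding circuit_R_def
    by (intro mult_carrier_mat[OF _ mult_carrier_mat[OF cX cC]] mult_carrier_mat[OF _ cQ]
        mult_carrier_mat[OF _ cZ] mult_carrier_mat[OF _ cA] mult_carrier_mat[OF cC cX])
  then show ?thesis by simp
qed

lemma qz1: "x < 2^(w+1) \<Longrightarrow> qbit (w+1) x 0 = 0 \<longleftrightarrow> x < 2^w"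
  using qbit_zero_iff[of x "w+1" 1] by simp

lemma pR_formula:
  assumes U: "unitary (2^w) Q" and kw: "k \<le> w"
  shows "p_acc (w+1) (circuit_R w k Q) 1 = (\<Sum>i<2^w. \<Sum>l<2^w. (1 / 2^w) * (cmod (circuit_R w k Q $$ (i,l)))\<^sup>2)"
proof -
  let ?R = "circuit_R w k Q" and ?N = "2^w :: nat" and ?M = "2^(w+1) :: nat"
  have Q: "Q \<in> carrier_mat (2^w) (2^w)" using U unfolding unitary_def by auto
  have cR: "?R \<in> carrier_mat ?M ?M" using R_carrier[OF Q kw] .
  have c: "Im (1 / 2 ^ (w + 1 - 1) :: complex) = 0" by simp
  have "p_acc (w+1) ?R 1 = (\<Sum>i<?M. \<Sum>l<?M. if qbit (w+1) i 0 = 0 \<and> (\<forall>j<1. qbit (w+1) l j = 0)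
      then Re (1 / 2 ^ (w + 1 - 1) :: complex) * (cmod (?R $$ (i,l)))\<^sup>2 else 0)"
    unfolding p_acc_def Pi_acc_def rho_init_def by (rule trace_diag[OF cR c])
  also have "\<dots> = (\<Sum>i<?M. if i < ?N then (\<Sum>l<?M. if l < ?N then (1 / 2^w) * (cmod (?R $$ (i,l)))\<^sup>2 else 0) else 0)"
  proof (intro sum.cong refl)
    fix i assume "i \<in> {..<?M}"
    then have i: "i < ?M" by simp
    show "(\<Sum>l<?M. if qbit (w+1) i 0 = 0 \<and> (\<forall>j<1. qbit (w+1) l j = 0)
      then Re (1 / 2 ^ (w + 1 - 1) :: complex) * (cmod (?R $$ (i,l)))\<^sup>2 else 0)
      = (if i < ?N then (\<Sum>l<?M. if l < ?N then (1 / 2^w) * (cmod (?R $$ (i,l)))\<^sup>2 else 0) else 0)"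
    proof (cases "i < ?N")
      case True
      have "(\<forall>j<1. qbit (w+1) l j = 0) \<longleftrightarrow> l < ?N" if "l < ?M" for l
        using qz1[OF that] by simp
      have qi: "qbit (w+1) i 0 = 0" using qz1[OF i] True by simp
      show ?thesis unfolding if_P[OF True]
      proof (intro sum.cong refl)
        fix l assume "l \<in> {..<?M}"
        then have l: "l < ?M" by simp
        show "(if qbit (w+1) i 0 = 0 \<and> (\<forall>j<1. qbit (w+1) l j = 0)
          then Re (1 / 2 ^ (w + 1 - 1) :: complex) * (cmod (?R $$ (i,l)))\<^sup>2 else 0)
          = (if l < ?N then (1 / 2^w) * (cmod (?R $$ (i,l)))\<^sup>2 else 0)"
          using qi \<open>l < ?M \<Longrightarrow> _\<close>[OF l] by simp
      qed
    next
      case False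
      then show ?thesis using qz1[OF i] by simp
    qed
  qed
  also have "\<dots> = (\<Sum>i<?N. \<Sum>l<?N. (1 / 2^w) * (cmod (?R $$ (i,l)))\<^sup>2)"
    by (simp add: sum_restrict)
  finally show ?thesis .
qed


lemma pQ_formula:
  assumes U: "unitary (2^w) Q" and k1: "1 \<le> k" and kw: "k \<le> w"
  shows "p_acc w Q k = (\<Sum>l<2^(w-k). gd w Q l) / 2^(w-k)"
proof -
  let ?N = "2^w :: nat" and ?L = "2^(w-k) :: nat" and ?h = "2^(w-1) :: nat"
  have Q: "Q \<in> carrier_mat ?N ?N" using U unfolding unitary_def by auto
  have c: "Im (1 / 2 ^ (w - k) :: complex) = 0" by simp
  have LN: "?L \<le> ?N" by (simp add: power_increasing)
  have "p_acc w Q k = (\<Sum>i<?N. \<Sum>l<?N. if qbit w i 0 = 0 \<and> (\<forall>j<k. qbit w l j = 0)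
      then Re (1 / 2 ^ (w - k) :: complex) * (cmod (Q $$ (i,l)))\<^sup>2 else 0)"
    unfolding p_acc_def Pi_acc_def rho_init_def by (rule trace_diag[OF Q c])
  also have "\<dots> = (\<Sum>i<?N. \<Sum>l<?N. if l < ?L then (if i < ?h then (cmod (Q $$ (i,l)))\<^sup>2 else 0) / 2^(w-k) else 0)"
  proof (intro sum.cong refl)
    fix i l assume "i \<in> {..<?N}" "l \<in> {..<?N}"
    then have il: "i < ?N" "l < ?N" by auto
    have a: "qbit w i 0 = 0 \<longleftrightarrow> i < ?h" using qbit_zero_iff[OF il(1), of 1] k1 kw by simp
    have b: "(\<forall>j<k. qbit w l j = 0) \<longleftrightarrow> l < ?L" using qbit_zero_iff[OF il(2) kw] .
    show "(if qbit w i 0 = 0 \<and> (\<forall>j<k. qbit w l j = 0)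
      then Re (1 / 2 ^ (w - k) :: complex) * (cmod (Q $$ (i,l)))\<^sup>2 else 0)
      = (if l < ?L then (if i < ?h then (cmod (Q $$ (i,l)))\<^sup>2 else 0) / 2^(w-k) else 0)"
      unfolding a b by simp
  qed
  also have "\<dots> = (\<Sum>l<?N. \<Sum>i<?N. if l < ?L then (if i < ?h then (cmod (Q $$ (i,l)))\<^sup>2 else 0) / 2^(w-k) else 0)"
    by (rule sum.swap)
  also have "\<dots> = (\<Sum>l<?N. if l < ?L then gd w Q l / 2^(w-k) else 0)"
    unfolding gd_def by (intro sum.cong refl) (simp add: sum_divide_distrib)
  also have "\<dots> = (\<Sum>l<?L. gd w Q l / 2^(w-k))"
    by (rule sum_restrict[OF LN])
  finally show ?thesis by (simp add: sum_divide_distrib)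
qed


lemma Rsum:
  assumes U: "unitary (2^w) Q" and k1: "1 \<le> k" and kw: "k \<le> w"
  shows "(\<Sum>i<2^w. \<Sum>l<2^w. (cmod (circuit_R w k Q $$ (i,l)))\<^sup>2)
    = (2^w - 2^(w-k)) + (\<Sum>r<2^(w-k). \<Sum>s<2^(w-k). (cmod (G w Q r s))\<^sup>2)"
proof -
  let ?N = "2^w :: nat" and ?K = "2^k :: nat" and ?L = "2^(w-k) :: nat"
  let ?p = "\<lambda>x. x div ?L = ?K - 1"
  let ?H = "\<lambda>r. \<Sum>s<?L. (cmod (G w Q r s))\<^sup>2"
  have KLN: "?K * ?L = ?N" using KL[OF kw] .
  have K0: "?K > 0" and L0: "?L > 0" by simp_all
  have sp: "sig ?K ?L x = x mod ?L" if "?p x" for x using that unfolding sig_def by simp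
  have "(\<Sum>i<?N. \<Sum>l<?N. (cmod (circuit_R w k Q $$ (i,l)))\<^sup>2)
     = (\<Sum>i<?N. if ?p i then ?H (i mod ?L) else 1)"
  proof (intro sum.cong refl)
    fix i assume "i \<in> {..<?N}"
    then have i: "i < ?N" by simp
    have "(\<Sum>l<?N. (cmod (circuit_R w k Q $$ (i,l)))\<^sup>2) = (\<Sum>l<?N.
      (if ?p i then (if ?p l then (cmod (G w Q (sig ?K ?L i) (sig ?K ?L l)))\<^sup>2 else 0)
       else (if i = l then 1 else 0)))"
      by (intro sum.cong refl) (simp add: R_mod[OF U k1 kw i])
    also have "\<dots> = (if ?p i then ?H (i mod ?L) else 1)"
    proof (cases "?p i")
      case True
      have "(\<Sum>l<?N. (if ?p l then (cmod (G w Q (sig ?K ?L i) (sig ?K ?L l)))\<^sup>2 else 0))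
          = (\<Sum>l<?K * ?L. (if ?p l then (cmod (G w Q (i mod ?L) (l mod ?L)))\<^sup>2 else 0))"
        unfolding KLN by (intro sum.cong refl) (simp add: sp True)
      also have "\<dots> = ?H (i mod ?L)" by (rule sum_reindex_block[OF K0 L0])
      finally show ?thesis using True by simp
    next
      case False
      then show ?thesis using i by simp
    qed
    finally show "(\<Sum>l<?N. (cmod (circuit_R w k Q $$ (i,l)))\<^sup>2) = (if ?p i then ?H (i mod ?L) else 1)" .
  qed
  also have "\<dots> = (\<Sum>i<?N. if ?p i then ?H (i mod ?L) else 0) + (\<Sum>i<?N. 1 - (if ?p i then 1 else 0))"
    unfolding sum.distrib[symmetric] by (intro sum.cong refl) simp
  also have "(\<Sum>i<?N. if ?p i then ?H (i mod ?L) else 0) = (\<Sum>r<?L. ?H r)"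
    using sum_reindex_block[OF K0 L0, of ?H] unfolding KLN .
  also have "(\<Sum>i<?N. 1 - (if ?p i then 1 else 0)) = real ?N - (\<Sum>i<?N. if ?p i then 1 else 0)"
    by (simp add: sum_subtractf)
  also have "(\<Sum>i<?N. if ?p i then 1 else (0::real)) = (\<Sum>r<?L. 1)"
    using sum_reindex_block[OF K0 L0, of "\<lambda>_. 1::real"] unfolding KLN .
  finally show ?thesis by simp
qed


theorem proposition11:
  fixes w k :: nat and Q :: "complex mat"
  assumes "unitary (2^w) Q" and "1 \<le> k" and "k \<le> w"
  shows "1 - (1 - (p_acc w Q k)\<^sup>2) / 2 ^ k \<le> p_acc (w+1) (circuit_R w k Q) 1
       \<and> p_acc (w+1) (circuit_R w k Q) 1 \<le> 1 - (1 - p_acc w Q k) / 2 ^ k"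
proof -
  note U = assms(1) and k1 = assms(2) and kw = assms(3)
  let ?N = "2^w :: nat" and ?L = "2^(w-k) :: nat"
  let ?H = "\<lambda>r. \<Sum>s<?L. (cmod (G w Q r s))\<^sup>2"
  define A where "A = (\<Sum>r<?L. gd w Q r)"
  define B where "B = (\<Sum>r<?L. (gd w Q r)\<^sup>2)"
  define S where "S = (\<Sum>r<?L. ?H r)"
  have LN: "?L \<le> ?N" by (simp add: power_increasing)
  have KLr: "(2::real)^w = 2^k * 2^(w-k)" using KL[OF kw] by (metis of_nat_numeral of_nat_mult of_nat_power)
  have p: "p_acc w Q k = A / real ?L" unfolding A_def using pQ_formula[OF U k1 kw] by simp
  have "p_acc (w+1) (circuit_R w k Q) 1 = (1 / 2^w) * (\<Sum>i<?N. \<Sum>l<?N. (cmod (circuit_R w k Q $$ (i,l)))\<^sup>2)"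
    unfolding pR_formula[OF U kw] by (simp add: sum_distrib_left)
  also have "\<dots> = (real ?N - real ?L + S) / real ?N"
    unfolding Rsum[OF U k1 kw] S_def by simp
  finally have pR: "p_acc (w+1) (circuit_R w k Q) 1 = (real ?N - real ?L + S) / real ?N" .
  have Hup: "?H r \<le> gd w Q r" if "r < ?L" for r
  proof -
    have "?H r \<le> (\<Sum>s<?N. (cmod (G w Q r s))\<^sup>2)"
      by (rule sum_mono2) (use LN in auto)
    also have "\<dots> = gd w Q r" by (intro G_rowsum[OF U]) (use that LN in linarith)
    finally show ?thesis .
  qed
  have Hlo: "(gd w Q r)\<^sup>2 \<le> ?H r" if "r < ?L" for r
  proof -
    have "(cmod (G w Q r r))\<^sup>2 \<le> ?H r"
      by (rule member_le_sum) (use that in auto)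
    moreover have "(cmod (G w Q r r))\<^sup>2 = (gd w Q r)\<^sup>2" unfolding G_diag by simp
    ultimately show ?thesis by simp
  qed
  have SA: "S \<le> A" unfolding S_def A_def by (rule sum_mono) (use Hup in auto)
  have BS: "B \<le> S" unfolding S_def B_def by (rule sum_mono) (use Hlo in auto)
  have AB: "A\<^sup>2 \<le> real ?L * B" unfolding A_def B_def by (rule cauchy_sum)
  show ?thesis
    using final_alg[of "2^k" "real ?L" "real ?N" "p_acc (w+1) (circuit_R w k Q) 1" S "p_acc w Q k" A B] pR p BS SA AB KLr
    by simp
qed


end
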